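(* Let $p_0,q\in\mathcal S^{d-1}$ and consider the preference dynamics with the fixed recommendation $q_t=q$ for all $t\ge 0$, i.e. $\tilde p_{t+1}=p_t+\eta_t\,(p_t^\top q)\,q$, $p_{t+1}=\tilde p_{t+1}/\|\tilde p_{t+1}\|_2$, with step sizes either constant ($\eta_t=\eta$) or decreasing ($\eta_t=\frac{\eta}{t+s}$). Then for all $t\ge 0$, \[p_t=\left(\frac{\gamma_t}{\sqrt{(q^\top p_0)^2+\gamma_t^2(1-(q^\top p_0)^2)}}\right)p_0+\left(\frac{q^\top p_0\,(1-\gamma_t)}{\sqrt{(q^\top p_0)^2+\gamma_t^2(1-(q^\top p_0)^2)}}\right)q,\] where $\gamma_t=(\eta+1)^{-t}$ in the constant case and $\gamma_t=\prod_{k=0}^{\eta-1}\frac{s+k}{t+s+k}$ in the decreasing case. Moreover, the magnitude of the coefficient of $p_0$ is nonincreasing in $t$ and the magnitude of the coefficient of $q$ is nondecreasing in $t$.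
   Context: $\mathcal S^{d-1}$ denotes the unit sphere in $\mathbb{R}^d$. In the constant step-size setting $\eta>0$ is a constant; in the decreasing step-size setting $\eta$ and $s$ are positive integers. *)

theory Defs
  imports "HOL-Analysis.Analysis"
begin

fun pref_dyn :: "(nat \<Rightarrow> real) \<Rightarrow> 'a::euclidean_space \<Rightarrow> 'a \<Rightarrow> nat \<Rightarrow> 'a" where
  "pref_dyn eta p0 q 0 = p0"
| "pref_dyn eta p0 q (Suc t) =
     (let pt = pref_dyn eta p0 q t;
          pp = pt + (eta t * (pt \<bullet> q)) *\<^sub>R q
      in pp /\<^sub>R norm pp)"

definition gamma_const :: "real \<Rightarrow> nat \<Rightarrow> real" where
  "gamma_const eta t = inverse ((eta + 1) ^ t)"

definition gamma_decr :: "nat \<Rightarrow> nat \<Rightarrow> nat \<Rightarrow> real" where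
  "gamma_decr eta s t = (\<Prod>k<eta. real (s + k) / real (t + s + k))"

definition coef_p0 :: "real \<Rightarrow> real \<Rightarrow> real" where
  "coef_p0 c g = g / sqrt (c\<^sup>2 + g\<^sup>2 * (1 - c\<^sup>2))"

definition coef_q :: "real \<Rightarrow> real \<Rightarrow> real" where
  "coef_q c g = c * (1 - g) / sqrt (c\<^sup>2 + g\<^sup>2 * (1 - c\<^sup>2))"

end

theory Submission
  imports Defs
begin

definition vv :: "'a::euclidean_space \<Rightarrow> 'a \<Rightarrow> real \<Rightarrow> 'a" where
  "vv p0 q g = g *\<^sub>R p0 + ((q \<bullet> p0) * (1 - g)) *\<^sub>R q"

lemma c_sq_le:
  fixes p0 q :: "'a::euclidean_space"
  assumes "norm p0 = 1" "norm q = 1"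
  shows "(q \<bullet> p0)\<^sup>2 \<le> 1"
proof -
  have "\<bar>q \<bullet> p0\<bar> \<le> 1" using Cauchy_Schwarz_ineq2[of q p0] assms by simp
  then show ?thesis by (simp add: abs_le_square_iff[symmetric] abs_le_iff power2_eq_square)
    (smt (verit) mult_le_one abs_le_iff abs_ge_zero abs_mult_self_eq)
qed

lemma D_pos:
  fixes c g :: real
  assumes "c\<^sup>2 \<le> 1" "g > 0"
  shows "c\<^sup>2 + g\<^sup>2 * (1 - c\<^sup>2) > 0"
proof (cases "c\<^sup>2 = 1")
  case True then show ?thesis by (smt (verit) mult_eq_0_iff)
next
  case False
  then have "c\<^sup>2 < 1" using assms by simp
  then have "g\<^sup>2 * (1 - c\<^sup>2) > 0" using assms by simp
  then show ?thesis by (smt (verit) zero_le_power2)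
qed

lemma norm_vv:
  fixes p0 q :: "'a::euclidean_space"
  assumes "norm p0 = 1" "norm q = 1"
  shows "norm (vv p0 q g) = sqrt ((q \<bullet> p0)\<^sup>2 + g\<^sup>2 * (1 - (q \<bullet> p0)\<^sup>2))"
proof -
  have pp: "p0 \<bullet> p0 = 1" and qq: "q \<bullet> q = 1" using assms by (simp_all add: inner_same_Basis norm_eq_1)
  have "vv p0 q g \<bullet> vv p0 q g = (q \<bullet> p0)\<^sup>2 + g\<^sup>2 * (1 - (q \<bullet> p0)\<^sup>2)"
    unfolding vv_def by (simp add: inner_add_left inner_add_right pp qq inner_commute[of p0 q] algebra_simps power2_eq_square)
  then show ?thesis by (simp add: norm_eq_sqrt_inner)
qed

lemma coef_form:
  fixes p0 q :: "'a::euclidean_space"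
  assumes "norm p0 = 1" "norm q = 1"
  shows "coef_p0 (q \<bullet> p0) g *\<^sub>R p0 + coef_q (q \<bullet> p0) g *\<^sub>R q = vv p0 q g /\<^sub>R norm (vv p0 q g)"
  unfolding norm_vv[OF assms] unfolding coef_p0_def coef_q_def vv_def
  by (simp add: scaleR_add_right divide_inverse_commute)

lemma normalize_scale:
  fixes w :: "'a::real_normed_vector"
  assumes "k > 0"
  shows "(k *\<^sub>R w) /\<^sub>R norm (k *\<^sub>R w) = w /\<^sub>R norm w"
  using assms by simp

lemma step:
  fixes p0 q :: "'a::euclidean_space"
  assumes "norm p0 = 1" "norm q = 1" "g > 0" "e > 0"
  defines "p \<equiv> vv p0 q g /\<^sub>R norm (vv p0 q g)"
  shows "(p + (e * (p \<bullet> q)) *\<^sub>R q) /\<^sub>R norm (p + (e * (p \<bullet> q)) *\<^sub>R q)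
     = vv p0 q (g / (1 + e)) /\<^sub>R norm (vv p0 q (g / (1 + e)))"
proof -
  define c where "c = q \<bullet> p0"
  define D where "D = norm (vv p0 q g)"
  have Dpos: "D > 0" unfolding D_def norm_vv[OF assms(1,2)]
    using D_pos[OF c_sq_le[OF assms(1,2)] assms(3)] by simp
  have qq: "q \<bullet> q = 1" using assms by (simp add: norm_eq_1)
  have vq: "vv p0 q g \<bullet> q = c" unfolding vv_def c_def
    by (simp add: inner_add_left qq inner_commute[of p0 q] algebra_simps)
  have pq: "p \<bullet> q = c / D" unfolding p_def D_def[symmetric] using vq by (simp add: divide_inverse_commute)
  have k1: "((1 + e) / D) * (g / (1 + e)) = g / D"
    and k2: "((1 + e) / D) * (c * (1 - g / (1 + e))) = c / D - c * g / D + c * e / D"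
  proof -
    define f where "f = 1 + e"
    have f: "f > 0" "e = f - 1" using assms(4) unfolding f_def by auto
    show "((1 + e) / D) * (g / (1 + e)) = g / D"
      "((1 + e) / D) * (c * (1 - g / (1 + e))) = c / D - c * g / D + c * e / D"
      unfolding f_def[symmetric] f(2) using f(1) Dpos by (simp_all add: field_simps)
  qed
  have "p + (e * (p \<bullet> q)) *\<^sub>R q = (g / D) *\<^sub>R p0 + (c / D - c * g / D + c * e / D) *\<^sub>R q"
    unfolding pq unfolding p_def D_def[symmetric] unfolding vv_def c_def[symmetric]
    by (simp add: scaleR_add_right algebra_simps divide_inverse)
  also have "\<dots> = ((1 + e) / D) *\<^sub>R vv p0 q (g / (1 + e))"
    unfolding vv_def c_def[symmetric] scaleR_add_right scaleR_scaleR k1 k2 ..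
  finally have "p + (e * (p \<bullet> q)) *\<^sub>R q = ((1 + e) / D) *\<^sub>R vv p0 q (g / (1 + e))" .
  moreover have "(1 + e) / D > 0" using Dpos assms(4) by simp
  ultimately show ?thesis by (simp only: normalize_scale)
qed

lemma dyn_general:
  fixes p0 q :: "'a::euclidean_space"
  assumes "norm p0 = 1" "norm q = 1"
    and e: "\<And>t. eta t > 0"
    and g0: "gam 0 = 1" and gS: "\<And>t. gam (Suc t) = gam t / (1 + eta t)"
  shows "pref_dyn eta p0 q t = vv p0 q (gam t) /\<^sub>R norm (vv p0 q (gam t))"
    and "gam t > 0"
proof -
  have "gam t > 0 \<and> pref_dyn eta p0 q t = vv p0 q (gam t) /\<^sub>R norm (vv p0 q (gam t))"
  proof (induction t)
    case 0
    have "vv p0 q 1 = p0" by (simp add: vv_def)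
    then show ?case using g0 assms(1) by simp
  next
    case (Suc t)
    have gp: "gam (Suc t) > 0" using Suc e[of t] gS[of t] by (smt (verit) divide_pos_pos)
    show ?case using gp Suc step[OF assms(1,2) _ e[of t], of "gam t"] gS[of t]
      by (simp add: Let_def)
  qed
  then show "pref_dyn eta p0 q t = vv p0 q (gam t) /\<^sub>R norm (vv p0 q (gam t))" and "gam t > 0"
    by auto
qed

lemma mono_p0:
  assumes "c\<^sup>2 \<le> 1" "0 < g2" "g2 \<le> g1"
  shows "\<bar>coef_p0 c g2\<bar> \<le> \<bar>coef_p0 c g1\<bar>"
proof -
  have g1: "g1 > 0" using assms by simp
  define A where "A = c\<^sup>2 + g1\<^sup>2 * (1 - c\<^sup>2)"
  define B where "B = c\<^sup>2 + g2\<^sup>2 * (1 - c\<^sup>2)"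
  have A: "A > 0" unfolding A_def using D_pos assms g1 by blast
  have B: "B > 0" unfolding B_def using D_pos assms by blast
  have "g2\<^sup>2 \<le> g1\<^sup>2" using assms by (simp add: power_mono)
  then have "g2\<^sup>2 * c\<^sup>2 \<le> g1\<^sup>2 * c\<^sup>2" by (simp add: mult_right_mono)
  then have "g2\<^sup>2 * A \<le> g1\<^sup>2 * B" unfolding A_def B_def by (simp add: algebra_simps)
  then have le: "g2\<^sup>2 / B \<le> g1\<^sup>2 / A" using A B by (simp add: divide_simps mult.commute)
  have "\<bar>coef_p0 c g2\<bar> = sqrt (g2\<^sup>2 / B)" unfolding coef_p0_def B_def[symmetric]
    using assms B by (simp add: real_sqrt_divide)
  moreover have "\<bar>coef_p0 c g1\<bar> = sqrt (g1\<^sup>2 / A)" unfolding coef_p0_def A_def[symmetric]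
    using g1 A by (simp add: real_sqrt_divide)
  ultimately show ?thesis using le by simp
qed

lemma mono_q:
  assumes "c\<^sup>2 \<le> 1" "0 < g2" "g2 \<le> g1" "g1 \<le> 1"
  shows "\<bar>coef_q c g1\<bar> \<le> \<bar>coef_q c g2\<bar>"
proof -
  have g1: "g1 > 0" using assms by simp
  define A where "A = c\<^sup>2 + g1\<^sup>2 * (1 - c\<^sup>2)"
  define B where "B = c\<^sup>2 + g2\<^sup>2 * (1 - c\<^sup>2)"
  have A: "A > 0" unfolding A_def using D_pos assms g1 by blast
  have B: "B > 0" unfolding B_def using D_pos assms by blast
  have "g2\<^sup>2 \<le> g1\<^sup>2" using assms by (simp add: power_mono)
  then have BA: "B \<le> A" unfolding A_def B_def using assms(1) by (simp add: mult_right_mono)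
  have "(1 - g1)\<^sup>2 \<le> (1 - g2)\<^sup>2" using assms by (simp add: power_mono)
  then have "(1 - g1)\<^sup>2 * B \<le> (1 - g2)\<^sup>2 * A" using BA B by (simp add: mult_mono)
  then have "(c * (1 - g1))\<^sup>2 * B \<le> (c * (1 - g2))\<^sup>2 * A"
    by (simp add: power_mult_distrib mult_left_mono mult.assoc)
  then have le: "(c * (1 - g1))\<^sup>2 / A \<le> (c * (1 - g2))\<^sup>2 / B" using A B by (simp add: divide_simps mult.commute)
  have "\<bar>coef_q c g2\<bar> = sqrt ((c * (1 - g2))\<^sup>2 / B)" unfolding coef_q_def B_def[symmetric]
    using B by (simp add: real_sqrt_divide)
  moreover have "\<bar>coef_q c g1\<bar> = sqrt ((c * (1 - g1))\<^sup>2 / A)" unfolding coef_q_def A_def[symmetric]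
    using A by (simp add: real_sqrt_divide)
  ultimately show ?thesis using le by simp
qed

lemma gam_props:
  fixes eta gam :: "nat \<Rightarrow> real"
  assumes e: "\<And>t. eta t > 0"
    and g0: "gam 0 = 1" and gS: "\<And>t. gam (Suc t) = gam t / (1 + eta t)"
    and gpos: "\<And>t. gam t > 0"
  shows "antimono gam" "\<And>t. gam t \<le> 1"
proof -
  have dec: "gam (Suc t) \<le> gam t" for t
  proof -
    have "gam t / (1 + eta t) \<le> gam t"
      using gpos[of t] e[of t] by (smt (verit) divide_le_eq mult_le_cancel_left1)
    then show ?thesis using gS[of t] by simp
  qed
  then show "antimono gam" by (simp add: antimono_iff_le_Suc)
  show "gam t \<le> 1" for t using \<open>antimono gam\<close> g0 by (metis antimonoD le0)
qed

lemma telescope: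
  "(\<Prod>k<n. real (a + k) / real (a + 1 + k)) = real a / real (a + n)" if "a > 0" for a n :: nat
  using that by (induction n) (auto simp: field_simps)

lemma gamma_decr_step:
  assumes "s > 0"
  shows "gamma_decr e s (Suc t) = gamma_decr e s t / (1 + real e / real (t + s))"
proof -
  have "gamma_decr e s (Suc t) = (\<Prod>k<e. (real (s + k) / real (t + s + k)) * (real (t + s + k) / real (t + s + 1 + k)))"
    unfolding gamma_decr_def using assms by (intro prod.cong) auto
  also have "\<dots> = gamma_decr e s t * (real (t + s) / real (t + s + e))"
    unfolding prod.distrib gamma_decr_def using telescope[of "t+s" e] assms by simp
  also have "\<dots> = gamma_decr e s t / (1 + real e / real (t + s))"
    using assms by (simp add: field_simps)
  finally show ?thesis .
qed

theorem corollary1: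
  fixes p0 q :: "'a::euclidean_space"
    and \<eta> :: real and \<eta>d s :: nat
  assumes "norm p0 = 1" and "norm q = 1"
    and "\<eta> > 0" and "\<eta>d > 0" and "s > 0"
  shows
    "(\<forall>t. pref_dyn (\<lambda>_. \<eta>) p0 q t =
            coef_p0 (q \<bullet> p0) (gamma_const \<eta> t) *\<^sub>R p0
          + coef_q (q \<bullet> p0) (gamma_const \<eta> t) *\<^sub>R q)
     \<and> antimono (\<lambda>t. \<bar>coef_p0 (q \<bullet> p0) (gamma_const \<eta> t)\<bar>)
     \<and> mono (\<lambda>t. \<bar>coef_q (q \<bullet> p0) (gamma_const \<eta> t)\<bar>)
     \<and> (\<forall>t. pref_dyn (\<lambda>t. real \<eta>d / real (t + s)) p0 q t =
            coef_p0 (q \<bullet> p0) (gamma_decr \<eta>d s t) *\<^sub>R p0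
          + coef_q (q \<bullet> p0) (gamma_decr \<eta>d s t) *\<^sub>R q)
     \<and> antimono (\<lambda>t. \<bar>coef_p0 (q \<bullet> p0) (gamma_decr \<eta>d s t)\<bar>)
     \<and> mono (\<lambda>t. \<bar>coef_q (q \<bullet> p0) (gamma_decr \<eta>d s t)\<bar>)"
proof -
  have c1: "(q \<bullet> p0)\<^sup>2 \<le> 1" using c_sq_le assms(1,2) .
  have general: "(\<forall>t. pref_dyn eta p0 q t =
            coef_p0 (q \<bullet> p0) (gam t) *\<^sub>R p0 + coef_q (q \<bullet> p0) (gam t) *\<^sub>R q)
     \<and> antimono (\<lambda>t. \<bar>coef_p0 (q \<bullet> p0) (gam t)\<bar>)
     \<and> mono (\<lambda>t. \<bar>coef_q (q \<bullet> p0) (gam t)\<bar>)"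
    if e: "\<And>t. eta t > 0" and g0: "gam 0 = 1" and gS: "\<And>t. gam (Suc t) = gam t / (1 + eta t)"
    for eta gam
  proof -
    have gpos: "\<And>t. gam t > 0" using dyn_general(2)[OF assms(1,2) e g0 gS] .
    have am: "antimono gam" and le1: "\<And>t. gam t \<le> 1" using gam_props[OF e g0 gS gpos] by auto
    show ?thesis
    proof (intro conjI allI)
      fix t show "pref_dyn eta p0 q t =
            coef_p0 (q \<bullet> p0) (gam t) *\<^sub>R p0 + coef_q (q \<bullet> p0) (gam t) *\<^sub>R q"
        using dyn_general(1)[OF assms(1,2) e g0 gS] coef_form[OF assms(1,2)] by simp
    next
      show "antimono (\<lambda>t. \<bar>coef_p0 (q \<bullet> p0) (gam t)\<bar>)"
        by (rule antimonoI, rule mono_p0[OF c1 gpos], erule antimonoD[OF am])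
    next
      show "mono (\<lambda>t. \<bar>coef_q (q \<bullet> p0) (gam t)\<bar>)"
        by (rule monoI, rule mono_q[OF c1 gpos], erule antimonoD[OF am], rule le1)
    qed
  qed
  have const: "(\<forall>t. pref_dyn (\<lambda>_. \<eta>) p0 q t =
            coef_p0 (q \<bullet> p0) (gamma_const \<eta> t) *\<^sub>R p0
          + coef_q (q \<bullet> p0) (gamma_const \<eta> t) *\<^sub>R q)
     \<and> antimono (\<lambda>t. \<bar>coef_p0 (q \<bullet> p0) (gamma_const \<eta> t)\<bar>)
     \<and> mono (\<lambda>t. \<bar>coef_q (q \<bullet> p0) (gamma_const \<eta> t)\<bar>)"
    by (rule general) (use assms(3) in \<open>auto simp: gamma_const_def field_simps\<close>)
  have decr: "(\<forall>t. pref_dyn (\<lambda>t. real \<eta>d / real (t + s)) p0 q t =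
            coef_p0 (q \<bullet> p0) (gamma_decr \<eta>d s t) *\<^sub>R p0
          + coef_q (q \<bullet> p0) (gamma_decr \<eta>d s t) *\<^sub>R q)
     \<and> antimono (\<lambda>t. \<bar>coef_p0 (q \<bullet> p0) (gamma_decr \<eta>d s t)\<bar>)
     \<and> mono (\<lambda>t. \<bar>coef_q (q \<bullet> p0) (gamma_decr \<eta>d s t)\<bar>)"
  proof (rule general)
    show "\<And>t. real \<eta>d / real (t + s) > 0" using assms by simp
    show "gamma_decr \<eta>d s 0 = 1" unfolding gamma_decr_def using assms by simp
    show "\<And>t. gamma_decr \<eta>d s (Suc t) = gamma_decr \<eta>d s t / (1 + real \<eta>d / real (t + s))"
      using gamma_decr_step[OF assms(5)] .
  qed
  show ?thesis using const decr by blast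
qed

end
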